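(* Let $a,b$ be fixed nonzero complex constants, let $\{a_i\},\{b_i\},\{c_i\},\{d_i\}$ ($i\in\mathbb{Z}$) be complex sequences of nonzero numbers, and let $m,n\ge0$ be integers such that for $-n\le j\le m$ the quantities $(1-aa_jc_j)(1-b\frac{a_j}{c_j})$, $(1-aa_jd_j)(1-b\frac{a_j}{d_j})$, $(b_j-c_j)(1-\frac{b}{ab_jc_j})$, $(b_j-d_j)(1-\frac{b}{ab_jd_j})$ are nonzero. Then $$\sum_{k=-n}^{m}(1-aa_kb_k)\Big(1-b\frac{a_k}{b_k}\Big)(c_k-d_k)\Big(1-\frac{b}{ac_kd_k}\Big)\frac{\prod_{j=1}^{k-1}(1-aa_jc_j)(1-b\frac{a_j}{c_j})}{\prod_{j=1}^{k}(1-aa_jd_j)(1-b\frac{a_j}{d_j})}\frac{\prod_{j=1}^{k-1}(b_j-d_j)(1-\frac{b}{ab_jd_j})}{\prod_{j=1}^{k}(b_j-c_j)(1-\frac{b}{ab_jc_j})}$$ $$=\frac{\prod_{j=1}^{m}(1-aa_jc_j)(1-b\frac{a_j}{c_j})}{\prod_{j=1}^{m}(1-aa_jd_j)(1-b\frac{a_j}{d_j})}\frac{\prod_{j=1}^{m}(b_j-d_j)(1-\frac{b}{ab_jd_j})}{\prod_{j=1}^{m}(b_j-c_j)(1-\frac{b}{ab_jc_j})}-\frac{\prod_{j=-n}^{0}(1-aa_jd_j)(1-b\frac{a_j}{d_j})}{\prod_{j=-n}^{0}(1-aa_jc_j)(1-b\frac{a_j}{c_j})}\frac{\prod_{j=-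n}^{0}(b_j-c_j)(1-\frac{b}{ab_jc_j})}{\prod_{j=-n}^{0}(b_j-d_j)(1-\frac{b}{ab_jd_j})}.$$
   Context: Products over integer ranges follow the convention: $\prod_{j=k}^{m}A_j=A_k\cdots A_m$ if $m\ge k$; $=1$ if $m=k-1$; $=(A_{m+1}\cdots A_{k-1})^{-1}$ if $m\le k-2$. The constants $a,b$ are distinct objects from the sequences $a_k,b_k$. *)

theory Defs
  imports "HOL-Analysis.Analysis"
begin

text \<open>Generalized product over an integer range, following the paper's convention:
  gprod A k m = A k * ... * A m if m >= k; = 1 if m = k - 1;
  = inverse (A (m+1) * ... * A (k-1)) if m <= k - 2.\<close>
definition gprod :: "(int \<Rightarrow> complex) \<Rightarrow> int \<Rightarrow> int \<Rightarrow> complex" where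
  "gprod A k m = (if m \<ge> k - 1 then (\<Prod>j\<in>{k..m}. A j)
                  else inverse (\<Prod>j\<in>{m+1..k-1}. A j))"

end

theory Submission
  imports Defs
begin

lemma key:
  fixes a b x y c d :: complex
  assumes "a\<noteq>0" "b\<noteq>0" "x\<noteq>0" "y\<noteq>0" "c\<noteq>0" "d\<noteq>0"
  shows "(1 - a*x*y)*(1 - b*x/y)*(c-d)*(1 - b/(a*c*d)) =
    ((1 - a*x*c)*(1 - b*x/c)) * ((y - d)*(1 - b/(a*y*d))) - ((1 - a*x*d)*(1 - b*x/d)) * ((y - c)*(1 - b/(a*y*c)))"
  using assms by (simp add: field_simps)

lemma gprod_step:
  assumes "A k \<noteq> 0"
  shows "gprod A 1 k = gprod A 1 (k-1) * A k"
proof (cases "k \<ge> 1")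
  case True
  have "{1..k} = insert k {1..k-1}" using True by auto
  then show ?thesis using True by (simp add: gprod_def mult.commute)
next
  case False
  show ?thesis
  proof (cases "k = 0")
    case True then show ?thesis using assms by (simp add: gprod_def)
  next
    case False2: False
    have "{k..0} = insert k {k+1..0}" using False False2 by auto
    then show ?thesis using False False2 assms by (simp add: gprod_def)
  qed
qed

lemma telesc:
  fixes f :: "int \<Rightarrow> complex"
  assumes "l - 1 \<le> m"
  shows "(\<Sum>k\<in>{l..m}. f k - f (k-1)) = f m - f (l-1)"
  using assms
proof (induction m rule: int_ge_induct)
  case base then show ?case by simp
next
  case (step i)
  have "{l..i+1} = insert (i+1) {l..i}" using step by auto
  then show ?case using step by simp
qed

lemma gen:
  fixes PC PD QC QD t :: "int \<Rightarrow> complex" and m n :: int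
  assumes "m \<ge> 0" "n \<ge> 0"
    and nz: "\<And>k. -n \<le> k \<Longrightarrow> k \<le> m \<Longrightarrow> PC k \<noteq> 0 \<and> PD k \<noteq> 0 \<and> QC k \<noteq> 0 \<and> QD k \<noteq> 0"
    and t: "\<And>k. -n \<le> k \<Longrightarrow> k \<le> m \<Longrightarrow> t k = PC k * QD k - PD k * QC k"
  shows "(\<Sum>k\<in>{-n..m}. t k * (gprod PC 1 (k-1) / gprod PD 1 k) * (gprod QD 1 (k-1) / gprod QC 1 k))
    = (gprod PC 1 m / gprod PD 1 m) * (gprod QD 1 m / gprod QC 1 m)
      - (gprod PD (-n) 0 / gprod PC (-n) 0) * (gprod QC (-n) 0 / gprod QD (-n) 0)"
proof -
  define F where "F k = (gprod PC 1 k / gprod PD 1 k) * (gprod QD 1 k / gprod QC 1 k)" for k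
  have step: "t k * (gprod PC 1 (k-1) / gprod PD 1 k) * (gprod QD 1 (k-1) / gprod QC 1 k) = F k - F (k-1)"
    if "k \<in> {-n..m}" for k
  proof -
    from that nz have z: "PC k \<noteq> 0" "PD k \<noteq> 0" "QC k \<noteq> 0" "QD k \<noteq> 0" by auto
    have e: "gprod PC 1 k = gprod PC 1 (k-1) * PC k" "gprod PD 1 k = gprod PD 1 (k-1) * PD k"
      "gprod QC 1 k = gprod QC 1 (k-1) * QC k" "gprod QD 1 k = gprod QD 1 (k-1) * QD k"
      using z by (simp_all add: gprod_step)
    have tk: "t k = PC k * QD k - PD k * QC k" using that t by auto
    show ?thesis unfolding F_def e tk using z
      by (cases "gprod PD 1 (k-1) = 0"; cases "gprod QC 1 (k-1) = 0"; simp add: field_simps; simp add: algebra_simps)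
  qed
  have "(\<Sum>k\<in>{-n..m}. t k * (gprod PC 1 (k-1) / gprod PD 1 k) * (gprod QD 1 (k-1) / gprod QC 1 k))
     = (\<Sum>k\<in>{-n..m}. F k - F (k-1))" by (rule sum.cong[OF refl], rule step)
  also have "\<dots> = F m - F (-n-1)" using telesc[of "-n" m F] assms by simp
  also have "F (-n-1) = (gprod PD (-n) 0 / gprod PC (-n) 0) * (gprod QC (-n) 0 / gprod QD (-n) 0)"
    using assms(2) by (simp add: F_def gprod_def field_simps)
  finally show ?thesis by (simp add: F_def)
qed

theorem corollary3p5:
  fixes a b :: complex and as bs cs ds :: "int \<Rightarrow> complex" and m n :: int
  assumes "a \<noteq> 0" "b \<noteq> 0"
    and "\<And>i. as i \<noteq> 0" "\<And>i. bs i \<noteq> 0" "\<And>i. cs i \<noteq> 0" "\<And>i. ds i \<noteq> 0"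
    and "m \<ge> 0" "n \<ge> 0"
    and "\<And>j. -n \<le> j \<Longrightarrow> j \<le> m \<Longrightarrow>
           (1 - a * as j * cs j) * (1 - b * as j / cs j) \<noteq> 0"
    and "\<And>j. -n \<le> j \<Longrightarrow> j \<le> m \<Longrightarrow>
           (1 - a * as j * ds j) * (1 - b * as j / ds j) \<noteq> 0"
    and "\<And>j. -n \<le> j \<Longrightarrow> j \<le> m \<Longrightarrow>
           (bs j - cs j) * (1 - b / (a * bs j * cs j)) \<noteq> 0"
    and "\<And>j. -n \<le> j \<Longrightarrow> j \<le> m \<Longrightarrow>
           (bs j - ds j) * (1 - b / (a * bs j * ds j)) \<noteq> 0"
  shows "(\<Sum>k\<in>{-n..m}.
      (1 - a * as k * bs k) * (1 - b * as k / bs k) * (cs k - ds k) * (1 - b / (a * cs k * ds k))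
      * (gprod (\<lambda>j. (1 - a * as j * cs j) * (1 - b * as j / cs j)) 1 (k - 1)
         / gprod (\<lambda>j. (1 - a * as j * ds j) * (1 - b * as j / ds j)) 1 k)
      * (gprod (\<lambda>j. (bs j - ds j) * (1 - b / (a * bs j * ds j))) 1 (k - 1)
         / gprod (\<lambda>j. (bs j - cs j) * (1 - b / (a * bs j * cs j))) 1 k))
    = (gprod (\<lambda>j. (1 - a * as j * cs j) * (1 - b * as j / cs j)) 1 m
         / gprod (\<lambda>j. (1 - a * as j * ds j) * (1 - b * as j / ds j)) 1 m)
      * (gprod (\<lambda>j. (bs j - ds j) * (1 - b / (a * bs j * ds j))) 1 m
         / gprod (\<lambda>j. (bs j - cs j) * (1 - b / (a * bs j * cs j))) 1 m)
      - (gprod (\<lambda>j. (1 - a * as j * ds j) * (1 - b * as j / ds j)) (-n) 0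
         / gprod (\<lambda>j. (1 - a * as j * cs j) * (1 - b * as j / cs j)) (-n) 0)
      * (gprod (\<lambda>j. (bs j - cs j) * (1 - b / (a * bs j * cs j))) (-n) 0
         / gprod (\<lambda>j. (bs j - ds j) * (1 - b / (a * bs j * ds j))) (-n) 0)"
  apply (rule gen)
  using assms by (auto intro!: key)

end
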